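(* Let $A=\{2^{i+1}-1 : i\ge 0\}=\{1,3,7,15,\dots\}$. Then for every $n\ge 1$, $\mathrm{Total}(n,A)=2^n-n$.
   Context: For an integer $n\ge 0$ and a set $A$ of positive integers with $1\in A$, the abstract generalized 2048 game $\mathrm{AGG}(n,A)$ is played on $n$ indistinguishable cells. A position assigns to each cell either nothing (empty) or a tile with a value in $A$; the initial position has all cells empty. A step, performable from any position with at least one empty cell, consists of: (i) placing a new tile of value $1$ into a chosen empty cell; then (ii) optionally choosing pairwise disjoint sets of nonempty cells, each with tile-value sum in $A$, and merging each set into a single tile of that sum placed in one of its cells, the other cells of the set becoming empty. The game ends when after a step all cells are nonempty. A position is reachable if obtainable from the initial position by finitely many steps; its total value is the sum of its tile values. $\mathrm{Total}(n,A)$ is the supremum of total values of reachable positions of $\mathrm{AGG}(n,A)$. *)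

theory Defs
  imports Main "HOL-Library.Multiset" "HOL-Library.Extended_Nat"
begin

text \<open>Cells are indistinguishable, so a position is the multiset of tile values
  on the nonempty cells; the number of empty cells is n minus its size.\<close>

definition merge_result :: "nat set \<Rightarrow> nat multiset \<Rightarrow> nat multiset \<Rightarrow> bool" where
  "merge_result A M M' \<longleftrightarrow>
     (\<exists>R Ss. M = R + sum_list Ss \<and>
             (\<forall>S\<in>set Ss. S \<noteq> {#} \<and> sum_mset S \<in> A) \<and>
             M' = R + mset (map sum_mset Ss))"

definition game_step :: "nat \<Rightarrow> nat set \<Rightarrow> nat multiset \<Rightarrow> nat multiset \<Rightarrow> bool" where
  "game_step n A P Q \<longleftrightarrow> size P < n \<and> merge_result A (P + {#1#}) Q"

inductive reachable :: "nat \<Rightarrow> nat set \<Rightarrow> nat multiset \<Rightarrow> bool" for n A where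
  init: "reachable n A {#}"
| step: "reachable n A P \<Longrightarrow> game_step n A P Q \<Longrightarrow> reachable n A Q"

definition Total :: "nat \<Rightarrow> nat set \<Rightarrow> enat" where
  "Total n A = (SUP P\<in>{P. reachable n A P}. enat (sum_mset P))"

end

theory Submission
  imports Defs
begin

lemma split_sub: "Q \<subseteq># X + Y \<Longrightarrow> \<exists>Q1 Q2. Q = Q1 + Q2 \<and> Q1 \<subseteq># X \<and> Q2 \<subseteq># Y"
proof -
  assume a: "Q \<subseteq># X + Y"
  have "Q = (Q \<inter># X) + (Q - X)" by (rule multiset_eqI) simp
  moreover have "Q - X \<subseteq># Y" using a
    by (auto simp: subseteq_mset_def) (metis add_diff_cancel_left' count_union diff_le_mono)
  moreover have "Q \<inter># X \<subseteq># X" by simp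
  ultimately show ?thesis by blast
qed

lemma sum_ge_size: "(\<forall>x\<in>#M. (1::nat) \<le> x) \<Longrightarrow> size M \<le> sum_mset M"
  by (induction M) auto

lemma L: "(\<forall>x\<in>#M. \<exists>k. x = (2::nat)^k) \<Longrightarrow> sum_mset M = 2^p - 1 \<Longrightarrow> p \<le> size M"
proof (induction "size M" arbitrary: M rule: less_induct)
  case less
  show ?case
  proof (cases "\<exists>x. 2 \<le> count M x")
    case True
    then obtain x where x: "2 \<le> count M x" by blast
    have "{#x,x#} \<subseteq># M" using x by (simp add: subseteq_mset_def)
    then obtain M0 where M0: "M = M0 + {#x,x#}" by (metis mset_subset_eq_exists_conv add.commute)
    define M' where "M' = M0 + {#2*x#}"
    have "size M' < size M" using M0 M'_def by simp
    moreover have "\<forall>y\<in>#M'. \<exists>k. y = (2::nat)^k"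
    proof -
      obtain k where "x = 2^k" using less.prems(1) M0 by auto
      hence "2*x = 2^(Suc k)" by simp
      thus ?thesis using less.prems(1) M0 M'_def by auto (metis power_Suc)
    qed
    moreover have "sum_mset M' = 2^p - 1" using less.prems(2) M0 M'_def by simp
    ultimately have "p \<le> size M'" using less.hyps by blast
    thus ?thesis using \<open>size M' < size M\<close> by simp
  next
    case False
    hence c: "\<forall>x. count M x \<le> 1" by (metis not_less_eq_eq numeral_2_eq_2 one_add_one Suc_1)
    define F where "F = set_mset M"
    have MF: "M = mset_set F"
    proof (rule multiset_eqI)
      fix x
      show "count M x = count (mset_set F) x"
        proof (cases "x \<in># M")
          case True
          hence "0 < count M x" by simp
          hence "count M x = 1" using c[rule_format, of x] by linarith
          thus ?thesis using True by (simp add: F_def)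
        next
          case False
          thus ?thesis by (simp add: F_def count_eq_zero_iff)
        qed
    qed
    define K where "K = {k. (2::nat)^k \<in> F}"
    have FK: "F = (\<lambda>k. 2^k) ` K" using less.prems(1) F_def K_def by auto
    have inj: "inj_on (\<lambda>k. (2::nat)^k) K" by (auto simp: inj_on_def)
    have sF: "sum_mset M = sum id F" using MF by (simp add: sum_unfold_sum_mset)
    also have "\<dots> = sum (\<lambda>k. (2::nat)^k) K" using FK inj by (simp add: sum.reindex)
    finally have sK: "sum (\<lambda>k. (2::nat)^k) K = 2^p - 1" using less.prems(2) by simp
    have "finite ((\<lambda>k. (2::nat)^k) ` K)" using FK F_def by (metis finite_set_mset)
    hence fK: "finite K" using finite_imageD inj by blast
    have Kp: "K \<subseteq> {0..<p}"
    proof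
      fix k assume k: "k \<in> K"
      have "(2::nat)^k \<le> sum (\<lambda>k. (2::nat)^k) K" by (rule member_le_sum[OF k _ fK]) simp
      hence a: "(2::nat)^k \<le> 2^p - 1" using sK by simp
      have "0 < (2::nat)^p" by simp
      hence "(2::nat)^k < 2^p" using a by linarith
      thus "k \<in> {0..<p}" using power_strict_increasing_iff[of "2::nat" k p] by simp
    qed
    have "K = {0..<p}"
    proof (rule ccontr)
      assume "K \<noteq> {0..<p}"
      then obtain b where b: "b \<in> {0..<p} - K" using Kp by blast
      have "sum (\<lambda>k. (2::nat)^k) K < sum (\<lambda>k. (2::nat)^k) {0..<p}"
        by (rule sum_strict_mono2[OF _ Kp b]) simp_all
      thus False using sK sum_power2 by simp
    qed
    hence "card F = p" using FK inj by (simp add: card_image)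
    thus ?thesis using MF by simp
  qed
qed

definition C :: "nat \<Rightarrow> nat multiset \<Rightarrow> bool" where
  "C n W \<longleftrightarrow> (\<forall>p\<le>n. \<exists>Q. Q \<subseteq># W \<and> size Q = p \<and> sum_mset Q \<le> 2^p)"

lemma sum_repl: "sum_mset (replicate_mset k (1::nat)) = k"
  by (induction k) auto

lemma merge_C:
  assumes "C n (X + G)" "G \<noteq> {#}" "\<forall>x\<in>#G. (1::nat) \<le> x"
  shows "C n (X + {#sum_mset G - (size G - 1)#} + replicate_mset (size G - 1) 1)"
  unfolding C_def
proof (intro allI impI)
  fix p assume p: "p \<le> n"
  define t where "t = sum_mset G - (size G - 1)"
  define Rp where "Rp = replicate_mset (size G - 1) (1::nat)"
  obtain Q where Q: "Q \<subseteq># X + G" "size Q = p" "sum_mset Q \<le> 2^p"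
    using assms(1) p unfolding C_def by blast
  obtain Q1 Q2 where QQ: "Q = Q1 + Q2" "Q1 \<subseteq># X" "Q2 \<subseteq># G" using split_sub[OF Q(1)] by blast
  have gs: "size G \<le> sum_mset G" using sum_ge_size assms(3) by blast
  have g1: "1 \<le> size G" using assms(2) by (simp add: Suc_le_eq nonempty_has_size)
  have "\<exists>Q'. Q' \<subseteq># X + ({#t#} + Rp) \<and> size Q' = p \<and> sum_mset Q' \<le> 2^p"
  proof (cases "Q2 = G")
    case True
    have s1: "Q1 + ({#t#} + Rp) \<subseteq># X + ({#t#} + Rp)"
      by (rule subset_mset.add_right_mono[OF QQ(2)])
    have s2: "size (Q1 + ({#t#} + Rp)) = p" using Q(2) QQ(1) True g1 by (simp add: Rp_def)
    have "sum_mset (Q1 + ({#t#} + Rp)) = sum_mset Q1 + sum_mset G"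
      using gs g1 by (simp add: Rp_def t_def sum_repl)
    also have "\<dots> = sum_mset Q" using QQ(1) True by simp
    finally have s3: "sum_mset (Q1 + ({#t#} + Rp)) \<le> 2^p" using Q(3) by simp
    show ?thesis using s1 s2 s3 by blast
  next
    case False
    hence "Q2 \<subset># G" using QQ(3) by (simp add: subset_mset.le_neq_trans)
    hence lt: "size Q2 < size G" by (rule mset_subset_size)
    define Q' where "Q' = Q1 + replicate_mset (size Q2) 1"
    have r: "replicate_mset (size Q2) (1::nat) \<subseteq># {#t#} + Rp"
      using lt by (auto simp: subseteq_mset_def Rp_def)
    have s1: "Q' \<subseteq># X + ({#t#} + Rp)"
      unfolding Q'_def by (rule subset_mset.add_mono[OF QQ(2) r])
    have s2: "size Q' = p" using Q QQ Q'_def by simp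
    have "\<forall>x\<in>#Q2. (1::nat) \<le> x" using assms(3) QQ(3) by (meson mset_subset_eqD)
    hence "size Q2 \<le> sum_mset Q2" using sum_ge_size by blast
    hence "sum_mset Q' \<le> sum_mset Q" using QQ(1) Q'_def by (simp add: sum_repl)
    hence s3: "sum_mset Q' \<le> 2^p" using Q(3) by simp
    show ?thesis using s1 s2 s3 by blast
  qed
  thus "\<exists>Q. Q \<subseteq># X + {#sum_mset G - (size G - 1)#} + replicate_mset (size G - 1) 1 \<and> size Q = p \<and> sum_mset Q \<le> 2^p"
    by (simp add: t_def Rp_def add.assoc)
qed

lemma place_C:
  assumes "C n (X + {#1#})" "\<forall>x\<in>#X. \<exists>k. x = (2::nat)^k"
  shows "C n (X + {#2#})"
  unfolding C_def
proof (intro allI impI)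
  fix p assume p: "p \<le> n"
  then obtain Q where Q: "Q \<subseteq># X + {#1#}" "size Q = p" "sum_mset Q \<le> 2^p"
    using assms(1) unfolding C_def by blast
  obtain Q1 Q2 where QQ: "Q = Q1 + Q2" "Q1 \<subseteq># X" "Q2 \<subseteq># {#1#}" using split_sub[OF Q(1)] by blast
  have "Q2 = {#} \<or> Q2 = {#1#}" using QQ(3) by (metis nonempty_subseteq_mset_eq_single)
  thus "\<exists>Q. Q \<subseteq># X + {#2#} \<and> size Q = p \<and> sum_mset Q \<le> 2^p"
  proof
    assume "Q2 = {#}"
    hence "Q = Q1" using QQ(1) by simp
    moreover have "X \<subseteq># X + {#2#}" by simp
    ultimately have "Q \<subseteq># X + {#2#}" using QQ(2) by (metis subset_mset.order_trans)
    thus ?thesis using Q(2,3) by blast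
  next
    assume q2: "Q2 = {#1#}"
    have pw: "\<forall>x\<in>#Q1. \<exists>k. x = (2::nat)^k" using assms(2) QQ(2) by (meson mset_subset_eqD)
    have sz: "size Q1 + 1 = p" using Q QQ q2 by simp
    have "sum_mset Q1 \<noteq> 2^p - 1"
    proof
      assume "sum_mset Q1 = 2^p - 1"
      hence "p \<le> size Q1" using L pw by blast
      thus False using sz by simp
    qed
    moreover have "sum_mset Q1 + 1 \<le> 2^p" using Q QQ q2 by simp
    ultimately have "sum_mset Q1 + 2 \<le> 2^p" by linarith
    moreover have "Q1 + {#2#} \<subseteq># X + {#2#}" using QQ(2) by simp
    moreover have "size (Q1 + {#2#}) = p" using sz by simp
    moreover have "sum_mset (Q1 + {#2#}) = sum_mset Q1 + 2" by simp
    ultimately show ?thesis by (metis (no_types))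
  qed
qed


definition W :: "nat \<Rightarrow> nat multiset \<Rightarrow> nat multiset" where
  "W n P = image_mset Suc P + replicate_mset (n - size P) 1"

definition Inv :: "nat \<Rightarrow> nat multiset \<Rightarrow> bool" where
  "Inv n P \<longleftrightarrow> size P \<le> n \<and> (\<forall>v\<in>#P. \<exists>k. Suc v = 2^k) \<and> C n (W n P)"

lemma repl_add: "replicate_mset a x + replicate_mset b x = replicate_mset (a + b) x"
  by (induction a) auto

lemma sum_Suc: "sum_mset (image_mset Suc S) = sum_mset S + size S"
  by (induction S) auto

lemma inv_init: "Inv n {#}"
proof -
  have "C n (replicate_mset n (1::nat))" unfolding C_def
  proof (intro allI impI)
    fix p :: nat assume "p \<le> n"
    moreover have "p \<le> 2^p" using less_exp[of p] by simp
    ultimately show "\<exists>Q. Q \<subseteq># replicate_mset n (1::nat) \<and> size Q = p \<and> sum_mset Q \<le> 2^p"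
      by (intro exI[of _ "replicate_mset p (1::nat)"]) (auto simp: subseteq_mset_def sum_repl)
  qed
  thus ?thesis by (simp add: Inv_def W_def)
qed

lemma inv_place: assumes "Inv n P" "size P < n" shows "Inv n (P + {#1#})"
proof -
  define X where "X = image_mset Suc P + replicate_mset (n - size P - 1) 1"
  have e: "n - size P = (n - size P - 1) + 1" using assms(2) by simp
  have "W n P = X + {#1#}" unfolding W_def X_def
    by (subst e, subst repl_add[symmetric]) simp
  hence c1: "C n (X + {#1#})" using assms(1) by (simp add: Inv_def)
  have pw: "\<forall>x\<in>#X. \<exists>k. x = (2::nat)^k" using assms(1) unfolding X_def Inv_def
    by (auto intro: exI[of _ 0])
  have "W n (P + {#1#}) = X + {#2#}" unfolding W_def X_def by simp
  hence "C n (W n (P + {#1#}))" using place_C[OF c1 pw] by simp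
  moreover have "\<forall>v\<in>#P + {#1#}. \<exists>k. Suc v = 2^k"
    using assms(1) by (auto simp: Inv_def intro: exI[of _ 1])
  ultimately show ?thesis using assms(2) by (simp add: Inv_def)
qed

abbreviation AA :: "nat set" where "AA \<equiv> {2 ^ (i + 1) - 1 | i. True}"

lemma inv_merge1:
  assumes "Inv n (R + S)" "S \<noteq> {#}" "sum_mset S \<in> AA"
  shows "Inv n (R + {#sum_mset S#})"
proof -
  define X where "X = image_mset Suc R + replicate_mset (n - size R - size S) 1"
  define G where "G = image_mset Suc S"
  have sz: "size R + size S \<le> n" using assms(1) by (simp add: Inv_def)
  have s1: "1 \<le> size S" using assms(2) by (simp add: Suc_le_eq nonempty_has_size)
  have "W n (R + S) = X + G" unfolding W_def X_def G_def by (simp add: add_ac diff_diff_add)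
  hence c: "C n (X + G)" using assms(1) by (simp add: Inv_def)
  have G1: "\<forall>x\<in>#G. (1::nat) \<le> x" unfolding G_def by auto
  have Gne: "G \<noteq> {#}" using assms(2) G_def by simp
  have "sum_mset G - (size G - 1) = Suc (sum_mset S)" unfolding G_def using s1 by (simp add: sum_Suc)
  moreover have "X + {#Suc (sum_mset S)#} + replicate_mset (size G - 1) 1 = W n (R + {#sum_mset S#})"
  proof -
    have "n - size R - size S + (size S - 1) = n - size (R + {#sum_mset S#})" using sz s1 by simp
    thus ?thesis unfolding W_def X_def G_def
      by (metis (no_types, lifting) add.commute add.left_commute image_mset_add_mset image_mset_single
          image_mset_union repl_add size_image_mset)
  qed
  ultimately have "C n (W n (R + {#sum_mset S#}))" using merge_C[OF c Gne G1] by simp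
  moreover have "\<forall>v\<in>#R + {#sum_mset S#}. \<exists>k. Suc v = 2^k"
  proof -
    obtain i where "sum_mset S = 2^(i+1) - 1" using assms(3) by blast
    hence "Suc (sum_mset S) = 2^(i+1)" by (metis Suc_pred' zero_less_power pos2)
    thus ?thesis using assms(1) by (auto simp: Inv_def) (metis power_Suc)
  qed
  moreover have "size (R + {#sum_mset S#}) \<le> n" using sz s1 by simp
  ultimately show ?thesis by (simp add: Inv_def)
qed

lemma inv_merge:
  "Inv n (R + sum_list Ss) \<Longrightarrow> \<forall>S\<in>set Ss. S \<noteq> {#} \<and> sum_mset S \<in> AA \<Longrightarrow> Inv n (R + mset (map sum_mset Ss))"
proof (induction Ss arbitrary: R)
  case Nil thus ?case by simp
next
  case (Cons S Ss)
  have "Inv n ((R + sum_list Ss) + S)" using Cons.prems(1) by (simp add: add_ac)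
  hence "Inv n ((R + sum_list Ss) + {#sum_mset S#})" using inv_merge1 Cons.prems(2) by simp
  hence h: "Inv n ((R + {#sum_mset S#}) + sum_list Ss)" by (simp add: add_ac)
  have "\<forall>S\<in>set Ss. S \<noteq> {#} \<and> sum_mset S \<in> AA" using Cons.prems(2) by simp
  hence "Inv n ((R + {#sum_mset S#}) + mset (map sum_mset Ss))" by (rule Cons.IH[OF h])
  thus ?case by (simp add: add_ac)
qed

lemma reach_inv: "reachable n AA P \<Longrightarrow> Inv n P"
proof (induction rule: reachable.induct)
  case init thus ?case by (rule inv_init)
next
  case (step P Q)
  from step.hyps(2) have "size P < n" and "merge_result AA (P + {#1#}) Q" by (auto simp: game_step_def)
  then obtain R Ss where "P + {#1#} = R + sum_list Ss" "\<forall>S\<in>set Ss. S \<noteq> {#} \<and> sum_mset S \<in> AA"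
    "Q = R + mset (map sum_mset Ss)" unfolding merge_result_def by blast
  moreover have "Inv n (P + {#1#})" using inv_place step.IH \<open>size P < n\<close> by blast
  ultimately show ?case using inv_merge by metis
qed

lemma inv_bound: assumes "Inv n P" shows "sum_mset P + n \<le> 2^n"
proof -
  have sz: "size P \<le> n" using assms by (simp add: Inv_def)
  have c: "C n (W n P)" using assms by (simp add: Inv_def)
  then obtain Q where Q: "Q \<subseteq># W n P" "size Q = n" "sum_mset Q \<le> 2^n" unfolding C_def by blast
  have sW: "size (W n P) = n" using sz by (simp add: W_def)
  have "Q = W n P"
  proof (rule ccontr)
    assume "Q \<noteq> W n P"
    hence "Q \<subset># W n P" using Q(1) by (simp add: subset_mset.le_neq_trans)
    hence "size Q < size (W n P)" by (rule mset_subset_size)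
    thus False using Q(2) sW by simp
  qed
  moreover have "sum_mset (W n P) = sum_mset P + n" using sz by (simp add: W_def sum_Suc sum_repl)
  ultimately show ?thesis using Q(3) by simp
qed


lemma step_place: "reachable n AA R \<Longrightarrow> size R < n \<Longrightarrow> reachable n AA (R + {#1#})"
  by (rule reachable.step, assumption)
     (auto simp: game_step_def merge_result_def intro!: exI[of _ "R + {#1#}"] exI[of _ "[]"])

lemma mk: "1 \<le> j \<Longrightarrow> reachable n AA R \<Longrightarrow> size R + j + 1 \<le> n \<Longrightarrow> reachable n AA (R + {#2^j - 1#})"
proof (induction j arbitrary: R rule: nat_induct_at_least)
  case base
  thus ?case using step_place by simp
next
  case (Suc j)
  define x :: nat where "x = 2^j - 1"
  have "size R + j + 1 \<le> n" using Suc.prems(2) by simp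
  hence r1: "reachable n AA (R + {#x#})" unfolding x_def by (rule Suc.IH[OF Suc.prems(1)])
  have "size (R + {#x#}) + j + 1 \<le> n" using Suc.prems(2) by simp
  hence r2: "reachable n AA (R + {#x#} + {#x#})" unfolding x_def by (rule Suc.IH[OF r1[unfolded x_def]])
  have "(1::nat) \<le> 2^j" by simp
  hence e: "(2::nat)^j = x + 1" unfolding x_def by linarith
  have e2: "2^(Suc j) - 1 = 2 * x + 1" using e by simp
  have "sum_mset {#x, x, 1#} = 2^(j+1) - 1" using e2 by simp
  hence inA: "sum_mset {#x, x, 1#} \<in> AA" by blast
  have "game_step n AA (R + {#x#} + {#x#}) (R + {#2^(Suc j) - 1#})"
    unfolding game_step_def merge_result_def
  proof (intro conjI exI[of _ R] exI[of _ "[{#x, x, 1#}]"])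
    show "size (R + {#x#} + {#x#}) < n" using Suc.prems(2) Suc.hyps by simp
    show "R + {#x#} + {#x#} + {#1#} = R + sum_list [{#x, x, 1#}]" by simp
    show "\<forall>S\<in>set [{#x, x, 1#}]. S \<noteq> {#} \<and> sum_mset S \<in> AA" using inA by simp
    show "R + {#2 ^ Suc j - 1#} = R + mset (map sum_mset [{#x, x, 1#}])"
      using e2 by simp
  qed
  thus ?case using r2 reachable.step by blast
qed

definition Tw :: "nat \<Rightarrow> nat \<Rightarrow> nat multiset" where
  "Tw n k = (\<Sum>j\<in>{n-k..<n}. {#2^j - 1#})"

lemma Tw_Suc: "Suc k \<le> n \<Longrightarrow> Tw n (Suc k) = Tw n k + {#2^(n - Suc k) - 1#}"
proof -
  assume a: "Suc k \<le> n"
  have "{n - Suc k..<n} = insert (n - Suc k) {n-k..<n}" using a by auto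
  thus ?thesis unfolding Tw_def using a by (simp add: add.commute)
qed

lemma size_Tw: "k \<le> n \<Longrightarrow> size (Tw n k) = k"
  by (induction k) (auto simp: Tw_Suc, simp add: Tw_def)

lemma reach_Tw: "k \<le> n - 1 \<Longrightarrow> reachable n AA (Tw n k)"
proof (induction k)
  case 0 thus ?case by (simp add: Tw_def reachable.init)
next
  case (Suc k)
  have "reachable n AA (Tw n k + {#2^(n - Suc k) - 1#})"
    using Suc by (intro mk) (auto simp: size_Tw)
  thus ?case using Suc.prems by (simp add: Tw_Suc)
qed

lemma sum_mset_sing: "sum_mset (\<Sum>j\<in>K. {#f j#}) = (\<Sum>j\<in>K. (f j::nat))"
  by (induction K rule: infinite_finite_induct) auto

lemma sum_Tw: "sum_mset (Tw n k) = (\<Sum>j\<in>{n-k..<n}. 2^j - 1)"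
  unfolding Tw_def by (rule sum_mset_sing)

lemma geo: "1 \<le> n \<Longrightarrow> (\<Sum>j\<in>{1..<n}. (2::nat)^j - 1) + n + 1 = 2^n"
proof (induction n rule: nat_induct_at_least)
  case base thus ?case by simp
next
  case (Suc n)
  have "(\<Sum>j\<in>{1..<Suc n}. (2::nat)^j - 1) = (\<Sum>j\<in>{1..<n}. (2::nat)^j - 1) + (2^n - 1)"
    using Suc.hyps by simp
  moreover have "(1::nat) \<le> 2^n" by simp
  ultimately show ?case using Suc.IH by simp
qed

theorem mainTheorem15:
  fixes n :: nat
  assumes "n \<ge> 1"
  shows "Total n {2 ^ (i + 1) - 1 | i. True} = enat (2 ^ n - n)"
proof -
  define P where "P = Tw n (n - 1) + {#1#}"
  have rP: "reachable n AA P" unfolding P_def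
    using assms by (intro step_place reach_Tw) (auto simp: size_Tw)
  have "sum_mset P = (\<Sum>j\<in>{1..<n}. (2::nat)^j - 1) + 1"
    unfolding P_def using assms by (simp add: sum_Tw)
  hence sP: "sum_mset P = 2^n - n" using geo[OF assms] by simp
  have ub: "sum_mset Q \<le> 2^n - n" if "reachable n AA Q" for Q
  proof -
    have "sum_mset Q + n \<le> 2^n" using inv_bound[OF reach_inv[OF that]] .
    thus ?thesis by arith
  qed
  show ?thesis unfolding Total_def
  proof (rule antisym)
    show "(SUP P\<in>{P. reachable n AA P}. enat (sum_mset P)) \<le> enat (2 ^ n - n)"
      by (rule SUP_least) (use ub in auto)
    show "enat (2 ^ n - n) \<le> (SUP P\<in>{P. reachable n AA P}. enat (sum_mset P))"
      using SUP_upper[of P "{P. reachable n AA P}" "\<lambda>P. enat (sum_mset P)"] rP sP by simp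
  qed
qed

end
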